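(* Let $\mathcal{M}=(S,A,\delta)$ be a finite fuzzy transition system with discounting factor $\gamma\in(0,1)$, let $\epsilon\in(0,1]$, and let $N=\lceil \log\epsilon/\log\gamma\rceil$. Then $\|\Delta^N(d_0)-d^\gamma_f\|\le\epsilon$, where $d_0=\bot$ is the constant-zero function on $S\times S$ and $\|e\|=\max_{s,t\in S}|e(s,t)|$.
   Context: A fuzzy set on a finite set $X$ is a map $\mu:X\to[0,1]$; $\mathcal{F}(X)$ is the set of fuzzy sets on $X$; $\mu(U)=\max_{x\in U}\mu(x)$. A fuzzy transition system is $\mathcal{M}=(S,A,\delta)$ with $S,A$ finite and $\delta:S\times A\to\mathcal{P}(\mathcal{F}(S))$, each $\delta(s,a)$ finite. $\mathcal{D}(S)$ is the set of pseudo-ultrametrics $d:S\times S\to[0,1]$, ordered pointwise. Lifting: $\hat d(\mu,\eta)=1$ if $\mu(S)\ne\eta(S)$, and otherwise $\hat d(\mu,\eta)$ is the minimum of $\max_{u,v}\min(d(u,v),x_{uv})$ over $x_{uv}\ge0$ with $\max_v x_{uv}=\mu(u)$ for all $u$ and $\max_u x_{uv}=\eta(v)$ for all $v$. For finite $Z\subseteq\mathcal{F}(S)$: $\hat d(\mu,Z)=\min_{\eta\in Z}\hat d(\mu,\eta)$ if $Z\ne\emptyset$, else $1$. Hausdorff distance: $H_{\hat d}(\emptyset,\emptyset)=0$, otherwise $H_{\hat d}(Y,Z)=\max(\max_{\mu\in Y}\hat d(\mu,Z),\max_{\eta\in Z}\hat d(\eta,Y))$. $\Delta(d)(s,t)=\gamma\cdot\max_{a\in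 A}H_{\hat d}(\delta(s,a),\delta(t,a))$ is a monotone map $\mathcal{D}(S)\to\mathcal{D}(S)$, and the behavioural distance $d^\gamma_f$ is its least fixpoint. *)

theory Defs
  imports Complex_Main
begin

text \<open>States are the finite type 'a, actions the finite type 'b.
A fuzzy set on the states is a function 'a \<Rightarrow> real with values in [0,1].\<close>

definition is_fuzzy :: "('a::finite \<Rightarrow> real) \<Rightarrow> bool" where
  "is_fuzzy \<mu> \<longleftrightarrow> (\<forall>x. 0 \<le> \<mu> x \<and> \<mu> x \<le> 1)"

definition fz_height :: "('a::finite \<Rightarrow> real) \<Rightarrow> real" where
  "fz_height \<mu> = Max (range \<mu>)"

definition is_FTS :: "('a::finite \<Rightarrow> 'b::finite \<Rightarrow> ('a \<Rightarrow> real) set) \<Rightarrow> bool" where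
  "is_FTS \<delta> \<longleftrightarrow> (\<forall>s a. finite (\<delta> s a) \<and> (\<forall>\<mu>\<in>\<delta> s a. is_fuzzy \<mu>))"

definition pseudo_ultrametric :: "('a \<Rightarrow> 'a \<Rightarrow> real) \<Rightarrow> bool" where
  "pseudo_ultrametric d \<longleftrightarrow>
     (\<forall>s t. 0 \<le> d s t \<and> d s t \<le> 1) \<and> (\<forall>s. d s s = 0) \<and>
     (\<forall>s t. d s t = d t s) \<and> (\<forall>s t u. d s u \<le> max (d s t) (d t u))"

definition fz_coupling :: "('a::finite \<Rightarrow> real) \<Rightarrow> ('a \<Rightarrow> real) \<Rightarrow> ('a \<Rightarrow> 'a \<Rightarrow> real) \<Rightarrow> bool" where
  "fz_coupling \<mu> \<eta> x \<longleftrightarrow> (\<forall>u v. 0 \<le> x u v) \<and>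
     (\<forall>u. Max (range (\<lambda>v. x u v)) = \<mu> u) \<and> (\<forall>v. Max (range (\<lambda>u. x u v)) = \<eta> v)"

definition coupling_cost :: "('a::finite \<Rightarrow> 'a \<Rightarrow> real) \<Rightarrow> ('a \<Rightarrow> 'a \<Rightarrow> real) \<Rightarrow> real" where
  "coupling_cost d x = Max (range (\<lambda>(u, v). min (d u v) (x u v)))"

text \<open>Lifting of d to fuzzy sets (the minimum is attained; we write it as an infimum).\<close>
definition lift :: "('a::finite \<Rightarrow> 'a \<Rightarrow> real) \<Rightarrow> ('a \<Rightarrow> real) \<Rightarrow> ('a \<Rightarrow> real) \<Rightarrow> real" where
  "lift d \<mu> \<eta> = (if fz_height \<mu> \<noteq> fz_height \<eta> then 1
     else Inf {coupling_cost d x | x. fz_coupling \<mu> \<eta> x})"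

definition lift_set :: "('a::finite \<Rightarrow> 'a \<Rightarrow> real) \<Rightarrow> ('a \<Rightarrow> real) \<Rightarrow> ('a \<Rightarrow> real) set \<Rightarrow> real" where
  "lift_set d \<mu> Z = (if Z = {} then 1 else Min ((\<lambda>\<eta>. lift d \<mu> \<eta>) ` Z))"

text \<open>Hausdorff distance; a maximum over an empty set is read as 0 (all values are \<ge> 0).\<close>
definition hausdorff :: "('a::finite \<Rightarrow> 'a \<Rightarrow> real) \<Rightarrow> ('a \<Rightarrow> real) set \<Rightarrow> ('a \<Rightarrow> real) set \<Rightarrow> real" where
  "hausdorff d Y Z = (if Y = {} \<and> Z = {} then 0 else
     max (Max (insert 0 ((\<lambda>\<mu>. lift_set d \<mu> Z) ` Y)))
         (Max (insert 0 ((\<lambda>\<eta>. lift_set d \<eta> Y) ` Z))))"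

definition Delta :: "real \<Rightarrow> ('a::finite \<Rightarrow> 'b::finite \<Rightarrow> ('a \<Rightarrow> real) set) \<Rightarrow>
    ('a \<Rightarrow> 'a \<Rightarrow> real) \<Rightarrow> ('a \<Rightarrow> 'a \<Rightarrow> real)" where
  "Delta \<gamma> \<delta> d = (\<lambda>s t. \<gamma> * Max (range (\<lambda>a. hausdorff d (\<delta> s a) (\<delta> t a))))"

definition behav_dist :: "real \<Rightarrow> ('a::finite \<Rightarrow> 'b::finite \<Rightarrow> ('a \<Rightarrow> real) set) \<Rightarrow> ('a \<Rightarrow> 'a \<Rightarrow> real)" where
  "behav_dist \<gamma> \<delta> = (THE d. pseudo_ultrametric d \<and> Delta \<gamma> \<delta> d = d \<and>
      (\<forall>d'. pseudo_ultrametric d' \<and> Delta \<gamma> \<delta> d' = d' \<longrightarrow> (\<forall>s t. d s t \<le> d' s t)))"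

definition sup_norm :: "('a::finite \<Rightarrow> 'a \<Rightarrow> real) \<Rightarrow> real" where
  "sup_norm e = Max (range (\<lambda>(s, t). \<bar>e s t\<bar>))"

end

theory Submission
  imports Defs
begin

lemma max_img_lip:
  fixes f g :: "'i \<Rightarrow> real"
  assumes "finite A" "A \<noteq> {}" "\<And>i. i \<in> A \<Longrightarrow> \<bar>f i - g i\<bar> \<le> c"
  shows "\<bar>Max (f ` A) - Max (g ` A)\<bar> \<le> c"
proof -
  have "Max (f ` A) \<in> f ` A" using assms by (intro Max_in) auto
  then obtain i where i: "i \<in> A" "Max (f ` A) = f i" by auto
  have "Max (g ` A) \<in> g ` A" using assms by (intro Max_in) auto
  then obtain j where j: "j \<in> A" "Max (g ` A) = g j" by auto
  have "f j \<le> Max (f ` A)" using assms j by (intro Max_ge) auto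
  moreover have "g i \<le> Max (g ` A)" using assms i by (intro Max_ge) auto
  ultimately show ?thesis using assms(3)[OF i(1)] assms(3)[OF j(1)] i j by (auto simp: abs_le_iff)
qed

lemma min_img_lip:
  fixes f g :: "'i \<Rightarrow> real"
  assumes "finite A" "A \<noteq> {}" "\<And>i. i \<in> A \<Longrightarrow> \<bar>f i - g i\<bar> \<le> c"
  shows "\<bar>Min (f ` A) - Min (g ` A)\<bar> \<le> c"
proof -
  have "Min (f ` A) \<in> f ` A" using assms by (intro Min_in) auto
  then obtain i where i: "i \<in> A" "Min (f ` A) = f i" by auto
  have "Min (g ` A) \<in> g ` A" using assms by (intro Min_in) auto
  then obtain j where j: "j \<in> A" "Min (g ` A) = g j" by auto
  have "Min (f ` A) \<le> f j" using assms j by (intro Min_le) auto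
  moreover have "Min (g ` A) \<le> g i" using assms i by (intro Min_le) auto
  ultimately show ?thesis using assms(3)[OF i(1)] assms(3)[OF j(1)] i j by (auto simp: abs_le_iff)
qed

lemma Max_range_eqI:
  fixes f :: "'i::finite \<Rightarrow> real"
  assumes "\<And>i. f i \<le> m" "m \<le> f j"
  shows "Max (range f) = m"
proof (rule antisym)
  show "Max (range f) \<le> m" using assms(1) by (auto simp: Max_le_iff)
  have "f j \<le> Max (range f)" by (intro Max_ge) auto
  then show "m \<le> Max (range f)" using assms(2) by linarith
qed

lemma Max_range_ge:
  fixes f :: "'i::finite \<Rightarrow> real"
  shows "f j \<le> Max (range f)"
  by (intro Max_ge) auto

lemma cost_ge:
  assumes "0 \<le> x u v"
  shows "min (d u v) 0 \<le> coupling_cost d x"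
proof -
  have "min (d u v) (x u v) \<le> coupling_cost d x"
    unfolding coupling_cost_def using Max_range_ge[of "\<lambda>(u, v). min (d u v) (x u v)" "(u,v)"] by simp
  then show ?thesis using assms by linarith
qed

lemma cost_lip:
  assumes "\<And>u v. \<bar>d u v - d' u v\<bar> \<le> c"
  shows "\<bar>coupling_cost d x - coupling_cost d' x\<bar> \<le> c"
  unfolding coupling_cost_def
proof (rule max_img_lip)
  fix p :: "'a \<times> 'a"
  obtain u v where p: "p = (u, v)" by (cases p)
  show "\<bar>(case p of (u, v) \<Rightarrow> min (d u v) (x u v)) - (case p of (u, v) \<Rightarrow> min (d' u v) (x u v))\<bar> \<le> c"
    using assms[of u v] p by (auto simp: min_def abs_le_iff)
qed auto

lemma bdd_cost: "bdd_below {coupling_cost d x |x. fz_coupling \<mu> \<eta> x}"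
  by (rule bdd_belowI[of _ "min (d undefined undefined) 0"])
     (auto simp: fz_coupling_def intro: cost_ge)

lemma inf_lip:
  fixes f g :: "'x \<Rightarrow> real"
  assumes "\<And>x. P x \<Longrightarrow> \<bar>f x - g x\<bar> \<le> c" "0 \<le> c"
    "bdd_below {f x|x. P x}" "bdd_below {g x|x. P x}"
  shows "\<bar>Inf {f x|x. P x} - Inf {g x|x. P x}\<bar> \<le> c"
proof (cases "\<exists>x. P x")
  case False then show ?thesis using assms(2) by simp
next
  case True
  have 1: "Inf {f x|x. P x} - c \<le> Inf {g x|x. P x}"
  proof (rule cInf_greatest)
    show "{g x |x. P x} \<noteq> {}" using True by auto
    fix y assume "y \<in> {g x|x. P x}"
    then obtain x where x: "P x" "y = g x" by auto
    then have "Inf {f x|x. P x} \<le> f x" by (intro cInf_lower assms(3)) auto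
    with assms(1)[OF x(1)] show "Inf {f x|x. P x} - c \<le> y" using x by (auto simp: abs_le_iff)
  qed
  have 2: "Inf {g x|x. P x} - c \<le> Inf {f x|x. P x}"
  proof (rule cInf_greatest)
    show "{f x |x. P x} \<noteq> {}" using True by auto
    fix y assume "y \<in> {f x|x. P x}"
    then obtain x where x: "P x" "y = f x" by auto
    then have "Inf {g x|x. P x} \<le> g x" by (intro cInf_lower assms(4)) auto
    with assms(1)[OF x(1)] show "Inf {g x|x. P x} - c \<le> y" using x by (auto simp: abs_le_iff)
  qed
  from 1 2 show ?thesis by (auto simp: abs_le_iff)
qed

lemma lift_lip:
  assumes "\<And>u v. \<bar>d u v - d' u v\<bar> \<le> c"
  shows "\<bar>lift d \<mu> \<eta> - lift d' \<mu> \<eta>\<bar> \<le> c"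
proof -
  have c: "0 \<le> c" using assms[of undefined undefined] by linarith
  show ?thesis unfolding lift_def
    using inf_lip[of "fz_coupling \<mu> \<eta>" "coupling_cost d" "coupling_cost d'" c, OF cost_lip[OF assms] c bdd_cost bdd_cost] c
    by auto
qed

lemma lift_set_lip:
  assumes "finite Z" "\<And>u v. \<bar>d u v - d' u v\<bar> \<le> c"
  shows "\<bar>lift_set d \<mu> Z - lift_set d' \<mu> Z\<bar> \<le> c"
proof -
  have c: "0 \<le> c" using assms(2)[of undefined undefined] by linarith
  show ?thesis
  proof (cases "Z = {}")
    case True then show ?thesis using c by (simp add: lift_set_def)
  next
    case False
    show ?thesis unfolding lift_set_def
      using False min_img_lip[OF assms(1) False, of "lift d \<mu>" "lift d' \<mu>" c] lift_lip[of d d' c, OF assms(2)] by auto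
  qed
qed

lemma max0_lip:
  fixes f g :: "'i \<Rightarrow> real"
  assumes "finite A" "\<And>i. i \<in> A \<Longrightarrow> \<bar>f i - g i\<bar> \<le> c" "0 \<le> c"
  shows "\<bar>Max (insert 0 (f ` A)) - Max (insert 0 (g ` A))\<bar> \<le> c"
proof (cases "A = {}")
  case True then show ?thesis using assms by simp
next
  case False
  have "\<bar>Max (f ` A) - Max (g ` A)\<bar> \<le> c" using max_img_lip[OF assms(1) False assms(2)] .
  moreover have "Max (insert 0 (f ` A)) = max 0 (Max (f ` A))" "Max (insert 0 (g ` A)) = max 0 (Max (g ` A))"
    using False assms(1) by (simp_all add: Max_insert)
  ultimately show ?thesis by (simp only:)
qed

lemma hausdorff_lip:
  assumes "finite Y" "finite Z" "\<And>u v. \<bar>d u v - d' u v\<bar> \<le> c"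
  shows "\<bar>hausdorff d Y Z - hausdorff d' Y Z\<bar> \<le> c"
proof -
  have c: "0 \<le> c" using assms(3)[of undefined undefined] by linarith
  have 1: "\<bar>Max (insert 0 ((\<lambda>\<mu>. lift_set d \<mu> Z) ` Y)) - Max (insert 0 ((\<lambda>\<mu>. lift_set d' \<mu> Z) ` Y))\<bar> \<le> c"
    by (rule max0_lip[OF assms(1) lift_set_lip[OF assms(2,3)] c])
  have 2: "\<bar>Max (insert 0 ((\<lambda>\<mu>. lift_set d \<mu> Y) ` Z)) - Max (insert 0 ((\<lambda>\<mu>. lift_set d' \<mu> Y) ` Z))\<bar> \<le> c"
    by (rule max0_lip[OF assms(2) lift_set_lip[OF assms(1,3)] c])
  show ?thesis unfolding hausdorff_def using 1 2 c by (auto simp: abs_le_iff max_def)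
qed

lemma Delta_lip:
  assumes "is_FTS \<delta>" "0 \<le> \<gamma>" "\<And>u v. \<bar>d u v - d' u v\<bar> \<le> c"
  shows "\<bar>Delta \<gamma> \<delta> d s t - Delta \<gamma> \<delta> d' s t\<bar> \<le> \<gamma> * c"
proof -
  have "\<bar>Max (range (\<lambda>a. hausdorff d (\<delta> s a) (\<delta> t a))) - Max (range (\<lambda>a. hausdorff d' (\<delta> s a) (\<delta> t a)))\<bar> \<le> c"
    using assms(1) by (intro max_img_lip hausdorff_lip assms(3)) (auto simp: is_FTS_def)
  then have "\<gamma> * \<bar>Max (range (\<lambda>a. hausdorff d (\<delta> s a) (\<delta> t a))) - Max (range (\<lambda>a. hausdorff d' (\<delta> s a) (\<delta> t a)))\<bar> \<le> \<gamma> * c"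
    using assms(2) by (rule mult_left_mono)
  then show ?thesis unfolding Delta_def using assms(2)
    by (simp add: abs_mult right_diff_distrib[symmetric])
qed


lemma pum_nonneg: "pseudo_ultrametric d \<Longrightarrow> 0 \<le> d s t"
  unfolding pseudo_ultrametric_def by blast
lemma pum_le1: "pseudo_ultrametric d \<Longrightarrow> d s t \<le> 1"
  unfolding pseudo_ultrametric_def by blast
lemma pum_refl: "pseudo_ultrametric d \<Longrightarrow> d s s = 0"
  unfolding pseudo_ultrametric_def by blast
lemma pum_sym: "pseudo_ultrametric d \<Longrightarrow> d s t = d t s"
  unfolding pseudo_ultrametric_def by blast
lemma pum_ultra: "pseudo_ultrametric d \<Longrightarrow> d s u \<le> max (d s t) (d t u)"
  unfolding pseudo_ultrametric_def by blast

lemma fz_height_ge: "\<mu> u \<le> fz_height \<mu>"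
  unfolding fz_height_def by (rule Max_range_ge)

lemma fz_height_in: "\<exists>u. fz_height \<mu> = \<mu> u"
proof -
  have "fz_height \<mu> \<in> range \<mu>" unfolding fz_height_def by (intro Max_in) auto
  then show ?thesis by auto
qed

lemma min_coupling:
  assumes "is_fuzzy \<mu>" "is_fuzzy \<eta>" "fz_height \<mu> = fz_height \<eta>"
  shows "fz_coupling \<mu> \<eta> (\<lambda>u v. min (\<mu> u) (\<eta> v))"
  unfolding fz_coupling_def
proof (intro conjI allI)
  fix u v show "0 \<le> min (\<mu> u) (\<eta> v)" using assms by (auto simp: is_fuzzy_def)
next
  fix u
  obtain v where v: "fz_height \<eta> = \<eta> v" using fz_height_in by blast
  show "Max (range (\<lambda>v. min (\<mu> u) (\<eta> v))) = \<mu> u"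
    by (rule Max_range_eqI[where j=v]) (use v assms(3) fz_height_ge[of \<mu> u] in auto)
next
  fix v
  obtain u where u: "fz_height \<mu> = \<mu> u" using fz_height_in by blast
  show "Max (range (\<lambda>u. min (\<mu> u) (\<eta> v))) = \<eta> v"
    by (rule Max_range_eqI[where j=u]) (use u assms(3) fz_height_ge[of \<eta> v] in auto)
qed

lemma diag_coupling:
  assumes "is_fuzzy \<mu>"
  shows "fz_coupling \<mu> \<mu> (\<lambda>u v. if u = v then \<mu> u else 0)"
  unfolding fz_coupling_def
proof (intro conjI allI)
  fix u v show "0 \<le> (if u = v then \<mu> u else 0)" using assms by (auto simp: is_fuzzy_def)
next
  fix u
  show "Max (range (\<lambda>v. if u = v then \<mu> u else 0)) = \<mu> u"
    by (rule Max_range_eqI[where j=u]) (use assms in \<open>auto simp: is_fuzzy_def\<close>)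
next
  fix v
  show "Max (range (\<lambda>u. if u = v then \<mu> u else 0)) = \<mu> v"
    by (rule Max_range_eqI[where j=v]) (use assms in \<open>auto simp: is_fuzzy_def\<close>)
qed

lemma cost_nonneg:
  assumes "pseudo_ultrametric d" "\<forall>u v. 0 \<le> x u v"
  shows "0 \<le> coupling_cost d x"
  using cost_ge[of x undefined undefined d] assms pum_nonneg[OF assms(1), of undefined undefined] by auto

lemma cost_le1:
  assumes "pseudo_ultrametric d"
  shows "coupling_cost d x \<le> 1"
proof -
  have "\<And>u v. min (d u v) (x u v) \<le> 1" using pum_le1[OF assms] by (simp add: min_le_iff_disj)
  then show ?thesis unfolding coupling_cost_def by (auto simp: Max_le_iff)
qed

lemma lift_bounds:
  assumes "pseudo_ultrametric d" "is_fuzzy \<mu>" "is_fuzzy \<eta>"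
  shows "0 \<le> lift d \<mu> \<eta> \<and> lift d \<mu> \<eta> \<le> 1"
proof (cases "fz_height \<mu> = fz_height \<eta>")
  case False then show ?thesis by (simp add: lift_def)
next
  case True
  let ?x = "\<lambda>u v. min (\<mu> u) (\<eta> v)"
  have c: "fz_coupling \<mu> \<eta> ?x" using min_coupling[OF assms(2,3) True] .
  have ne: "{coupling_cost d x |x. fz_coupling \<mu> \<eta> x} \<noteq> {}" using c by auto
  have "0 \<le> Inf {coupling_cost d x |x. fz_coupling \<mu> \<eta> x}"
    using ne by (intro cInf_greatest) (auto intro!: cost_nonneg[OF assms(1)] simp: fz_coupling_def)
  moreover have "Inf {coupling_cost d x |x. fz_coupling \<mu> \<eta> x} \<le> coupling_cost d ?x"
    using c by (intro cInf_lower bdd_cost) auto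
  ultimately show ?thesis using cost_le1[OF assms(1), of ?x] True by (simp add: lift_def)
qed

lemma lift_refl:
  assumes "pseudo_ultrametric d" "is_fuzzy \<mu>"
  shows "lift d \<mu> \<mu> = 0"
proof -
  let ?x = "\<lambda>u v. if u = v then \<mu> u else 0"
  have c: "fz_coupling \<mu> \<mu> ?x" using diag_coupling[OF assms(2)] .
  have z: "min (d u v) (?x u v) = 0" for u v
  proof (cases "u = v")
    case True then show ?thesis using pum_refl[OF assms(1), of u] assms(2) by (simp add: is_fuzzy_def)
  next
    case False then show ?thesis using pum_nonneg[OF assms(1), of u v] by simp
  qed
  have "coupling_cost d ?x = 0" unfolding coupling_cost_def
    by (rule Max_range_eqI[where j="(undefined, undefined)"]) (auto simp: z simp del: min_def)
  moreover have "Inf {coupling_cost d x |x. fz_coupling \<mu> \<mu> x} \<le> coupling_cost d ?x"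
    using c by (intro cInf_lower bdd_cost) auto
  moreover have "lift d \<mu> \<mu> \<ge> 0" using lift_bounds[OF assms(1,2,2)] by simp
  ultimately show ?thesis by (simp add: lift_def)
qed

lemma coupling_transp: "fz_coupling \<mu> \<eta> x \<Longrightarrow> fz_coupling \<eta> \<mu> (\<lambda>u v. x v u)"
  unfolding fz_coupling_def by auto

lemma cost_transp:
  assumes "pseudo_ultrametric d"
  shows "coupling_cost d (\<lambda>u v. x v u) = coupling_cost d x"
proof -
  have "range (\<lambda>(u, v). min (d u v) (x v u)) = range (\<lambda>(u, v). min (d u v) (x u v))"
  proof (intro equalityI subsetI)
    fix y assume "y \<in> range (\<lambda>(u, v). min (d u v) (x v u))"
    then obtain u v where "y = min (d u v) (x v u)" by auto
    then have "y = (\<lambda>(u, v). min (d u v) (x u v)) (v, u)" using pum_sym[OF assms] by simp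
    then show "y \<in> range (\<lambda>(u, v). min (d u v) (x u v))" by blast
  next
    fix y assume "y \<in> range (\<lambda>(u, v). min (d u v) (x u v))"
    then obtain u v where "y = min (d u v) (x u v)" by auto
    then have "y = (\<lambda>(u, v). min (d u v) (x v u)) (v, u)" using pum_sym[OF assms] by simp
    then show "y \<in> range (\<lambda>(u, v). min (d u v) (x v u))" by blast
  qed
  then show ?thesis unfolding coupling_cost_def by simp
qed

lemma lift_sym:
  assumes "pseudo_ultrametric d"
  shows "lift d \<mu> \<eta> = lift d \<eta> \<mu>"
proof -
  have sub: "{coupling_cost d x |x. fz_coupling \<mu>' \<eta>' x} \<subseteq> {coupling_cost d x |x. fz_coupling \<eta>' \<mu>' x}" for \<mu>' \<eta>'
  proof
    fix y assume "y \<in> {coupling_cost d x |x. fz_coupling \<mu>' \<eta>' x}"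
    then obtain x where x: "y = coupling_cost d x" "fz_coupling \<mu>' \<eta>' x" by auto
    then have "y = coupling_cost d (\<lambda>u v. x v u)" using cost_transp[OF assms] by simp
    with coupling_transp[OF x(2)] show "y \<in> {coupling_cost d x |x. fz_coupling \<eta>' \<mu>' x}" by blast
  qed
  have "{coupling_cost d x |x. fz_coupling \<mu> \<eta> x} = {coupling_cost d x |x. fz_coupling \<eta> \<mu> x}"
    using sub[of \<mu> \<eta>] sub[of \<eta> \<mu>] by blast
  then show ?thesis unfolding lift_def by auto
qed


lemma coupling_le_row: "fz_coupling \<mu> \<eta> x \<Longrightarrow> x u v \<le> \<mu> u"
  unfolding fz_coupling_def using Max_range_ge[of "\<lambda>v. x u v" v] by metis

lemma coupling_le_col: "fz_coupling \<mu> \<eta> x \<Longrightarrow> x u v \<le> \<eta> v"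
  unfolding fz_coupling_def using Max_range_ge[of "\<lambda>u. x u v" u] by metis

lemma coupling_row_in: "fz_coupling \<mu> \<eta> x \<Longrightarrow> \<exists>v. x u v = \<mu> u"
proof -
  assume c: "fz_coupling \<mu> \<eta> x"
  have "Max (range (\<lambda>v. x u v)) \<in> range (\<lambda>v. x u v)" by (intro Max_in) auto
  with c show ?thesis unfolding fz_coupling_def by auto
qed

lemma coupling_col_in: "fz_coupling \<mu> \<eta> x \<Longrightarrow> \<exists>u. x u v = \<eta> v"
proof -
  assume c: "fz_coupling \<mu> \<eta> x"
  have "Max (range (\<lambda>u. x u v)) \<in> range (\<lambda>u. x u v)" by (intro Max_in) auto
  with c show ?thesis unfolding fz_coupling_def by auto
qed

definition comp_coup :: "('a::finite \<Rightarrow> 'a \<Rightarrow> real) \<Rightarrow> ('a \<Rightarrow> 'a \<Rightarrow> real) \<Rightarrow> 'a \<Rightarrow> 'a \<Rightarrow> real" where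
  "comp_coup x y = (\<lambda>u w. Max (range (\<lambda>v. min (x u v) (y v w))))"

lemma comp_coup_ge: "min (x u v) (y v w) \<le> comp_coup x y u w"
  unfolding comp_coup_def by (rule Max_range_ge)

lemma comp_coup_in: "\<exists>v. comp_coup x y u w = min (x u v) (y v w)"
proof -
  have "Max (range (\<lambda>v. min (x u v) (y v w))) \<in> range (\<lambda>v. min (x u v) (y v w))" by (intro Max_in) auto
  then obtain v where "Max (range (\<lambda>v. min (x u v) (y v w))) = min (x u v) (y v w)" by (rule rangeE)
  then show ?thesis unfolding comp_coup_def by blast
qed

lemma comp_coupling:
  assumes x: "fz_coupling \<mu> \<eta> x" and y: "fz_coupling \<eta> \<zeta> y"
  shows "fz_coupling \<mu> \<zeta> (comp_coup x y)"
  unfolding fz_coupling_def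
proof (intro conjI allI)
  fix u w
  have "0 \<le> min (x u u) (y u w)" using x y by (auto simp: fz_coupling_def)
  then show "0 \<le> comp_coup x y u w" using comp_coup_ge[of x u u y w] by linarith
next
  fix u
  obtain v1 where v1: "x u v1 = \<mu> u" using coupling_row_in[OF x] by blast
  obtain w1 where w1: "y v1 w1 = \<eta> v1" using coupling_row_in[OF y] by blast
  have le: "x u v1 \<le> \<eta> v1" using coupling_le_col[OF x] .
  show "Max (range (\<lambda>w. comp_coup x y u w)) = \<mu> u"
  proof (rule Max_range_eqI[where j=w1])
    fix w
    obtain v where "comp_coup x y u w = min (x u v) (y v w)" using comp_coup_in by blast
    then show "comp_coup x y u w \<le> \<mu> u" using coupling_le_row[OF x, of u v] by linarith
  next
    show "\<mu> u \<le> comp_coup x y u w1" using comp_coup_ge[of x u v1 y w1] v1 w1 le by linarith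
  qed
next
  fix w
  obtain v1 where v1: "y v1 w = \<zeta> w" using coupling_col_in[OF y] by blast
  obtain u1 where u1: "x u1 v1 = \<eta> v1" using coupling_col_in[OF x] by blast
  have le: "y v1 w \<le> \<eta> v1" using coupling_le_row[OF y] .
  show "Max (range (\<lambda>u. comp_coup x y u w)) = \<zeta> w"
  proof (rule Max_range_eqI[where j=u1])
    fix u
    obtain v where "comp_coup x y u w = min (x u v) (y v w)" using comp_coup_in by blast
    then show "comp_coup x y u w \<le> \<zeta> w" using coupling_le_col[OF y, of v w] by linarith
  next
    show "\<zeta> w \<le> comp_coup x y u1 w" using comp_coup_ge[of x u1 v1 y w] v1 u1 le by linarith
  qed
qed

lemma cost_elem: "min (d u v) (x u v) \<le> coupling_cost d x"
  unfolding coupling_cost_def using Max_range_ge[of "\<lambda>(u, v). min (d u v) (x u v)" "(u,v)"] by simp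

lemma comp_cost:
  assumes "pseudo_ultrametric d"
  shows "coupling_cost d (comp_coup x y) \<le> max (coupling_cost d x) (coupling_cost d y)"
proof -
  have "min (d u w) (comp_coup x y u w) \<le> max (coupling_cost d x) (coupling_cost d y)" for u w
  proof -
    obtain v where v: "comp_coup x y u w = min (x u v) (y v w)" using comp_coup_in by blast
    have t: "d u w \<le> max (d u v) (d v w)" by (rule pum_ultra[OF assms])
    have 1: "min (d u v) (x u v) \<le> coupling_cost d x" by (rule cost_elem)
    have 2: "min (d v w) (y v w) \<le> coupling_cost d y" by (rule cost_elem)
    show ?thesis using v t 1 2 by (auto simp: min_def max_def split: if_splits)
  qed
  then show ?thesis unfolding coupling_cost_def[of d "comp_coup x y"] by (auto simp: Max_le_iff)
qed

lemma lift_ultra: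
  assumes d: "pseudo_ultrametric d" and f: "is_fuzzy \<mu>" "is_fuzzy \<eta>" "is_fuzzy \<zeta>"
  shows "lift d \<mu> \<zeta> \<le> max (lift d \<mu> \<eta>) (lift d \<eta> \<zeta>)"
proof (cases "fz_height \<mu> = fz_height \<eta> \<and> fz_height \<eta> = fz_height \<zeta>")
  case False
  then have "max (lift d \<mu> \<eta>) (lift d \<eta> \<zeta>) = 1"
    using lift_bounds[OF d f(1,2)] lift_bounds[OF d f(2,3)] by (auto simp: lift_def max_def)
  then show ?thesis using lift_bounds[OF d f(1,3)] by simp
next
  case True
  let ?A = "{coupling_cost d x |x. fz_coupling \<mu> \<eta> x}"
  let ?B = "{coupling_cost d x |x. fz_coupling \<eta> \<zeta> x}"
  let ?C = "{coupling_cost d x |x. fz_coupling \<mu> \<zeta> x}"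
  have neA: "?A \<noteq> {}" using min_coupling[OF f(1,2)] True by blast
  have neB: "?B \<noteq> {}" using min_coupling[OF f(2,3)] True by blast
  have key: "Inf ?C \<le> max a b" if ha: "a \<in> ?A" and hb: "b \<in> ?B" for a b
  proof -
    obtain x where x: "a = coupling_cost d x" "fz_coupling \<mu> \<eta> x" using ha by blast
    obtain y where y: "b = coupling_cost d y" "fz_coupling \<eta> \<zeta> y" using hb by blast
    have "Inf ?C \<le> coupling_cost d (comp_coup x y)"
      using comp_coupling[OF x(2) y(2)] by (intro cInf_lower bdd_cost) auto
    then show ?thesis using comp_cost[OF d, of x y] x y by linarith
  qed
  have "Inf ?C \<le> max (Inf ?A) (Inf ?B)"
  proof (rule ccontr)
    assume "\<not> ?thesis"
    then have lt: "max (Inf ?A) (Inf ?B) < Inf ?C" by (simp only: not_le)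
    define e where "e = Inf ?C - max (Inf ?A) (Inf ?B)"
    have e: "0 < e" using lt e_def by simp
    obtain a where a: "a \<in> ?A" "a < Inf ?A + e" using cInf_lessD[OF neA, of "Inf ?A + e"] e by auto
    obtain b where b: "b \<in> ?B" "b < Inf ?B + e" using cInf_lessD[OF neB, of "Inf ?B + e"] e by auto
    have "Inf ?C \<le> max a b" using key a b by blast
    then show False using a b e_def by (auto simp: max_def split: if_splits)
  qed
  then show ?thesis using True unfolding lift_def by simp
qed

lemma lift_set_le: "finite Z \<Longrightarrow> \<eta> \<in> Z \<Longrightarrow> lift_set d \<mu> Z \<le> lift d \<mu> \<eta>"
  unfolding lift_set_def by (auto intro: Min_le)

lemma lift_set_in: "finite Z \<Longrightarrow> Z \<noteq> {} \<Longrightarrow> \<exists>\<eta>\<in>Z. lift_set d \<mu> Z = lift d \<mu> \<eta>"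
proof -
  assume "finite Z" "Z \<noteq> {}"
  then have "Min (lift d \<mu> ` Z) \<in> lift d \<mu> ` Z" by (intro Min_in) auto
  then show ?thesis using \<open>Z \<noteq> {}\<close> unfolding lift_set_def by auto
qed

lemma lift_set_bounds:
  assumes "pseudo_ultrametric d" "finite Z" "\<forall>\<eta>\<in>Z. is_fuzzy \<eta>" "is_fuzzy \<mu>"
  shows "0 \<le> lift_set d \<mu> Z \<and> lift_set d \<mu> Z \<le> 1"
proof (cases "Z = {}")
  case True then show ?thesis by (simp add: lift_set_def)
next
  case False
  then obtain \<eta> where "\<eta> \<in> Z" "lift_set d \<mu> Z = lift d \<mu> \<eta>" using lift_set_in[OF assms(2)] by blast
  then show ?thesis using lift_bounds[OF assms(1,4)] assms(3) by auto
qed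

lemma H_ge1:
  assumes "finite Y" "\<mu> \<in> Y"
  shows "lift_set d \<mu> Z \<le> hausdorff d Y Z"
proof -
  have "lift_set d \<mu> Z \<le> Max (insert 0 ((\<lambda>\<mu>. lift_set d \<mu> Z) ` Y))"
    using assms by (intro Max_ge) auto
  moreover have "\<not> (Y = {} \<and> Z = {})" using assms by auto
  then have "hausdorff d Y Z = max (Max (insert 0 ((\<lambda>\<mu>. lift_set d \<mu> Z) ` Y))) (Max (insert 0 ((\<lambda>\<eta>. lift_set d \<eta> Y) ` Z)))"
    unfolding hausdorff_def by (rule if_not_P)
  ultimately show ?thesis by (metis max.cobounded1 order_trans)
qed

lemma H_ge2:
  assumes "finite Z" "\<eta> \<in> Z"
  shows "lift_set d \<eta> Y \<le> hausdorff d Y Z"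
proof -
  have "lift_set d \<eta> Y \<le> Max (insert 0 ((\<lambda>\<mu>. lift_set d \<mu> Y) ` Z))"
    using assms by (intro Max_ge) auto
  moreover have "\<not> (Y = {} \<and> Z = {})" using assms by auto
  then have "hausdorff d Y Z = max (Max (insert 0 ((\<lambda>\<mu>. lift_set d \<mu> Z) ` Y))) (Max (insert 0 ((\<lambda>\<eta>. lift_set d \<eta> Y) ` Z)))"
    unfolding hausdorff_def by (rule if_not_P)
  ultimately show ?thesis by (metis max.cobounded2 order_trans)
qed

lemma H_le:
  assumes "finite Y" "finite Z" "0 \<le> m" "\<forall>\<mu>\<in>Y. lift_set d \<mu> Z \<le> m" "\<forall>\<eta>\<in>Z. lift_set d \<eta> Y \<le> m"
  shows "hausdorff d Y Z \<le> m"
  unfolding hausdorff_def using assms by (auto simp: Max_le_iff)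

lemma H_nonneg:
  assumes "finite Y" "finite Z"
  shows "0 \<le> hausdorff d Y Z"
proof -
  have "0 \<le> Max (insert 0 ((\<lambda>\<mu>. lift_set d \<mu> Z) ` Y))" using assms by (intro Max_ge) auto
  then show ?thesis unfolding hausdorff_def by auto
qed

lemma H_sym: "hausdorff d Y Z = hausdorff d Z Y"
  unfolding hausdorff_def by (auto simp: max.commute)

lemma H_one_side:
  assumes d: "pseudo_ultrametric d" and fin: "finite X" "finite Y" "finite W"
    and fz: "\<forall>\<mu>\<in>X. is_fuzzy \<mu>" "\<forall>\<mu>\<in>Y. is_fuzzy \<mu>" "\<forall>\<mu>\<in>W. is_fuzzy \<mu>"
    and mu: "\<mu> \<in> X"
  shows "lift_set d \<mu> W \<le> max (hausdorff d X Y) (hausdorff d Y W)"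
proof -
  have lw: "lift_set d \<mu> W \<le> 1" using lift_set_bounds[OF d fin(3) fz(3)] fz(1) mu by auto
  show ?thesis
  proof (cases "Y = {}")
    case True
    then have "1 \<le> hausdorff d X Y" using H_ge1[OF fin(1) mu, of d Y] by (simp add: lift_set_def)
    then show ?thesis using lw by linarith
  next
    case False
    obtain \<eta> where eta: "\<eta> \<in> Y" "lift_set d \<mu> Y = lift d \<mu> \<eta>" using lift_set_in[OF fin(2) False] by blast
    have h1: "lift d \<mu> \<eta> \<le> hausdorff d X Y" using H_ge1[OF fin(1) mu, of d Y] eta by simp
    show ?thesis
    proof (cases "W = {}")
      case True
      then have "1 \<le> hausdorff d Y W" using H_ge1[OF fin(2) eta(1), of d W] by (simp add: lift_set_def)
      then show ?thesis using lw by linarith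
    next
      case False
      obtain \<zeta> where zeta: "\<zeta> \<in> W" "lift_set d \<eta> W = lift d \<eta> \<zeta>" using lift_set_in[OF fin(3) False] by blast
      have h2: "lift d \<eta> \<zeta> \<le> hausdorff d Y W" using H_ge1[OF fin(2) eta(1), of d W] zeta by simp
      have "lift_set d \<mu> W \<le> lift d \<mu> \<zeta>" by (rule lift_set_le[OF fin(3) zeta(1)])
      also have "\<dots> \<le> max (lift d \<mu> \<eta>) (lift d \<eta> \<zeta>)"
        using lift_ultra[OF d] fz mu eta zeta by blast
      finally show ?thesis using h1 h2 by (auto simp: max_def split: if_splits)
    qed
  qed
qed

lemma H_ultra:
  assumes d: "pseudo_ultrametric d" and fin: "finite X" "finite Y" "finite W"
    and fz: "\<forall>\<mu>\<in>X. is_fuzzy \<mu>" "\<forall>\<mu>\<in>Y. is_fuzzy \<mu>" "\<forall>\<mu>\<in>W. is_fuzzy \<mu>"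
  shows "hausdorff d X W \<le> max (hausdorff d X Y) (hausdorff d Y W)"
proof (rule H_le[OF fin(1,3)])
  show "0 \<le> max (hausdorff d X Y) (hausdorff d Y W)" using H_nonneg[OF fin(1,2), of d] by linarith
  show "\<forall>\<mu>\<in>X. lift_set d \<mu> W \<le> max (hausdorff d X Y) (hausdorff d Y W)"
    using H_one_side[OF d fin fz] by blast
  show "\<forall>\<eta>\<in>W. lift_set d \<eta> X \<le> max (hausdorff d X Y) (hausdorff d Y W)"
    using H_one_side[OF d fin(3,2,1) fz(3,2,1)] H_sym[of d] by (metis max.commute)
qed

lemma H_le1:
  assumes d: "pseudo_ultrametric d" and fin: "finite Y" "finite Z"
    and fz: "\<forall>\<mu>\<in>Y. is_fuzzy \<mu>" "\<forall>\<mu>\<in>Z. is_fuzzy \<mu>"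
  shows "hausdorff d Y Z \<le> 1"
  using lift_set_bounds[OF d fin(2) fz(2)] lift_set_bounds[OF d fin(1) fz(1)] fz
  by (intro H_le[OF fin]) auto

lemma H_refl:
  assumes d: "pseudo_ultrametric d" and fin: "finite Y" and fz: "\<forall>\<mu>\<in>Y. is_fuzzy \<mu>"
  shows "hausdorff d Y Y = 0"
proof -
  have "\<forall>\<mu>\<in>Y. lift_set d \<mu> Y \<le> 0"
  proof
    fix \<mu> assume m: "\<mu> \<in> Y"
    have "lift_set d \<mu> Y \<le> lift d \<mu> \<mu>" by (rule lift_set_le[OF fin m])
    then show "lift_set d \<mu> Y \<le> 0" using lift_refl[OF d] fz m by simp
  qed
  then have "hausdorff d Y Y \<le> 0" by (intro H_le[OF fin fin]) auto
  then show ?thesis using H_nonneg[OF fin fin, of d] by linarith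
qed


lemma FTS_fin: "is_FTS \<delta> \<Longrightarrow> finite (\<delta> s a)"
  unfolding is_FTS_def by blast
lemma FTS_fz: "is_FTS \<delta> \<Longrightarrow> \<forall>\<mu>\<in>\<delta> s a. is_fuzzy \<mu>"
  unfolding is_FTS_def by blast

lemma Delta_pum:
  assumes F: "is_FTS \<delta>" and g: "0 < \<gamma>" "\<gamma> < 1" and d: "pseudo_ultrametric d"
  shows "pseudo_ultrametric (Delta \<gamma> \<delta> d)"
proof -
  define M where "M s t = Max (range (\<lambda>a. hausdorff d (\<delta> s a) (\<delta> t a)))" for s t
  have D: "Delta \<gamma> \<delta> d s t = \<gamma> * M s t" for s t unfolding Delta_def M_def by simp
  have M0: "0 \<le> M s t" for s t
    using Max_range_ge[of "\<lambda>a. hausdorff d (\<delta> s a) (\<delta> t a)" undefined]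
      H_nonneg[OF FTS_fin[OF F] FTS_fin[OF F], of d s undefined t undefined] unfolding M_def by linarith
  have M1: "M s t \<le> 1" for s t
    unfolding M_def using H_le1[OF d FTS_fin[OF F] FTS_fin[OF F] FTS_fz[OF F] FTS_fz[OF F]]
    by (auto simp: Max_le_iff)
  have Mr: "M s s = 0" for s
    unfolding M_def by (rule Max_range_eqI[where j=undefined])
      (use H_refl[OF d FTS_fin[OF F] FTS_fz[OF F]] in auto)
  have Ms: "M s t = M t s" for s t
    unfolding M_def by (simp add: H_sym[of d "\<delta> s _"])
  have Mu: "M s u \<le> max (M s t) (M t u)" for s t u
  proof -
    have "hausdorff d (\<delta> s a) (\<delta> u a) \<le> max (M s t) (M t u)" for a
    proof -
      have "hausdorff d (\<delta> s a) (\<delta> u a) \<le> max (hausdorff d (\<delta> s a) (\<delta> t a)) (hausdorff d (\<delta> t a) (\<delta> u a))"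
        by (rule H_ultra[OF d FTS_fin[OF F] FTS_fin[OF F] FTS_fin[OF F] FTS_fz[OF F] FTS_fz[OF F] FTS_fz[OF F]])
      moreover have "hausdorff d (\<delta> s a) (\<delta> t a) \<le> M s t" unfolding M_def by (rule Max_range_ge)
      moreover have "hausdorff d (\<delta> t a) (\<delta> u a) \<le> M t u" unfolding M_def by (rule Max_range_ge)
      ultimately show ?thesis by (auto simp: max_def split: if_splits)
    qed
    then show ?thesis unfolding M_def[of s u] by (auto simp: Max_le_iff)
  qed
  show ?thesis unfolding pseudo_ultrametric_def D
  proof (intro conjI allI)
    fix s t
    show "0 \<le> \<gamma> * M s t" using g M0 by simp
    show "\<gamma> * M s t \<le> 1" using g M1[of s t] mult_left_le[of "M s t" \<gamma>] M0[of s t]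
      by (metis less_eq_real_def mult.commute mult_le_one)
    show "\<gamma> * M s t = \<gamma> * M t s" using Ms by simp
  next
    fix s show "\<gamma> * M s s = 0" using Mr by simp
  next
    fix s t u
    have "\<gamma> * M s u \<le> \<gamma> * max (M s t) (M t u)" using Mu g by (intro mult_left_mono) auto
    also have "\<dots> = max (\<gamma> * M s t) (\<gamma> * M t u)" using g by (auto simp: max_def)
    finally show "\<gamma> * M s u \<le> max (\<gamma> * M s t) (\<gamma> * M t u)" .
  qed
qed

lemma vanish:
  fixes a c \<gamma> :: real
  assumes "0 < \<gamma>" "\<gamma> < 1" "\<And>n. a \<le> c * \<gamma> ^ n"
  shows "a \<le> 0"
proof (rule ccontr)
  assume "\<not> a \<le> 0"
  then have a: "0 < a" by simp
  have c: "0 < c" using assms(3)[of 0] a by simp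
  obtain n where n: "\<gamma> ^ n < a / c" using real_arch_pow_inv[of "a / c" \<gamma>] a c assms(2) by auto
  have "c * \<gamma> ^ n < c * (a / c)" using n c by (intro mult_strict_left_mono) auto
  then have "c * \<gamma> ^ n < a" using c by simp
  with assms(3)[of n] show False by simp
qed


theorem theorem2:
  fixes \<delta> :: "'a::finite \<Rightarrow> 'b::finite \<Rightarrow> ('a \<Rightarrow> real) set"
    and \<gamma> \<epsilon> :: real
  assumes "is_FTS \<delta>"
    and "0 < \<gamma>" and "\<gamma> < 1"
    and "0 < \<epsilon>" and "\<epsilon> \<le> 1"
  shows "sup_norm (\<lambda>s t. ((Delta \<gamma> \<delta> ^^ nat \<lceil>ln \<epsilon> / ln \<gamma>\<rceil>) (\<lambda>_ _. 0)) s t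
                          - behav_dist \<gamma> \<delta> s t) \<le> \<epsilon>"
proof -
  note F = assms(1) and g = assms(2,3)
  define D where "D n = (Delta \<gamma> \<delta> ^^ n) (\<lambda>_ _. 0)" for n
  have D0: "D 0 = (\<lambda>_ _. 0)" by (simp add: D_def)
  have DS: "D (Suc n) = Delta \<gamma> \<delta> (D n)" for n by (simp add: D_def)
  have pum0: "pseudo_ultrametric (\<lambda>(_::'a) (_::'a). 0::real)" by (simp add: pseudo_ultrametric_def)
  have Dp: "pseudo_ultrametric (D n)" for n
    by (induction n) (use pum0 Delta_pum[OF F g] in \<open>auto simp: D0 DS\<close>)
  have lipD: "\<bar>Delta \<gamma> \<delta> d s t - Delta \<gamma> \<delta> d' s t\<bar> \<le> \<gamma> * c" if "\<And>u v. \<bar>d u v - d' u v\<bar> \<le> c" for d d' c s t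
    using Delta_lip[OF F _ that] g by simp
  have B1: "\<bar>D (n + m) s t - D n s t\<bar> \<le> \<gamma> ^ n" for n m s t
  proof (induction n arbitrary: s t)
    case 0 then show ?case using pum_nonneg[OF Dp] pum_le1[OF Dp] by (simp add: D0)
  next
    case (Suc n)
    have "\<bar>Delta \<gamma> \<delta> (D (n + m)) s t - Delta \<gamma> \<delta> (D n) s t\<bar> \<le> \<gamma> * \<gamma> ^ n"
      by (rule lipD) (rule Suc.IH)
    then show ?case by (simp add: DS)
  qed
  have conv: "convergent (\<lambda>n. D n s t)" for s t
  proof -
    have "Cauchy (\<lambda>n. D n s t)"
    proof (rule CauchyI)
      fix e :: real assume e: "0 < e"
      obtain M where M: "\<gamma> ^ M < e / 2" using real_arch_pow_inv[of "e/2" \<gamma>] e g by auto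
      have "\<forall>m\<ge>M. \<forall>n\<ge>M. norm (D m s t - D n s t) < e"
      proof (intro allI impI)
        fix m n assume "M \<le> m" "M \<le> n"
        then have "\<bar>D m s t - D M s t\<bar> \<le> \<gamma> ^ M" "\<bar>D n s t - D M s t\<bar> \<le> \<gamma> ^ M"
          using B1[of M "m - M" s t] B1[of M "n - M" s t] by simp_all
        then show "norm (D m s t - D n s t) < e" using M by simp
      qed
      then show "\<exists>M. \<forall>m\<ge>M. \<forall>n\<ge>M. norm (D m s t - D n s t) < e" by blast
    qed
    then show ?thesis by (simp add: Cauchy_convergent_iff)
  qed
  define ds where "ds s t = lim (\<lambda>n. D n s t)" for s t
  have lim: "(\<lambda>n. D n s t) \<longlonglongrightarrow> ds s t" for s t
    using conv[of s t] unfolding ds_def by (simp add: convergent_LIMSEQ_iff)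
  have B2: "\<bar>D n s t - ds s t\<bar> \<le> \<gamma> ^ n" for n s t
  proof -
    have "(\<lambda>m. D (m + n) s t) \<longlonglongrightarrow> ds s t" by (rule LIMSEQ_ignore_initial_segment[OF lim])
    then have "(\<lambda>m. \<bar>D (m + n) s t - D n s t\<bar>) \<longlonglongrightarrow> \<bar>ds s t - D n s t\<bar>"
      by (intro tendsto_rabs tendsto_diff tendsto_const)
    moreover have "\<forall>m\<ge>0. \<bar>D (m + n) s t - D n s t\<bar> \<le> \<gamma> ^ n" using B1[of n _ s t] by (metis add.commute)
    ultimately have "\<bar>ds s t - D n s t\<bar> \<le> \<gamma> ^ n" by (intro LIMSEQ_le_const2) blast+
    then show ?thesis by simp
  qed
  have pds: "pseudo_ultrametric ds"
    unfolding pseudo_ultrametric_def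
  proof (intro conjI allI)
    fix s t
    show "0 \<le> ds s t"
    proof -
      have "- ds s t \<le> 1 * \<gamma> ^ n" for n using B2[of n s t] pum_nonneg[OF Dp, of n s t] by simp
      then show ?thesis using vanish[OF g, of "- ds s t" 1] by simp
    qed
    show "ds s t \<le> 1"
    proof -
      have "ds s t - 1 \<le> 1 * \<gamma> ^ n" for n using B2[of n s t] pum_le1[OF Dp, of n s t] by simp
      then show ?thesis using vanish[OF g, of "ds s t - 1" 1] by simp
    qed
    show "ds s t = ds t s"
    proof -
      have "ds s t - ds t s \<le> 2 * \<gamma> ^ n" "ds t s - ds s t \<le> 2 * \<gamma> ^ n" for n
        using B2[of n s t] B2[of n t s] pum_sym[OF Dp, of n s t] by simp_all
      then show ?thesis using vanish[OF g, of "ds s t - ds t s" 2] vanish[OF g, of "ds t s - ds s t" 2] by simp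
    qed
  next
    fix s
    have "ds s s \<le> 1 * \<gamma> ^ n" "- ds s s \<le> 1 * \<gamma> ^ n" for n
      using B2[of n s s] pum_refl[OF Dp, of n s] by simp_all
    then show "ds s s = 0" using vanish[OF g, of "ds s s" 1] vanish[OF g, of "- ds s s" 1] by simp
  next
    fix s t u
    have "ds s u - max (ds s t) (ds t u) \<le> 2 * \<gamma> ^ n" for n
    proof -
      have a: "ds s u \<le> D n s u + \<gamma> ^ n" using B2[of n s u] by (simp add: abs_le_iff)
      have b: "D n s t \<le> ds s t + \<gamma> ^ n" using B2[of n s t] by (simp add: abs_le_iff)
      have c: "D n t u \<le> ds t u + \<gamma> ^ n" using B2[of n t u] by (simp add: abs_le_iff)
      have m: "D n s u \<le> max (D n s t) (D n t u)" by (rule pum_ultra[OF Dp])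
      have "max (D n s t) (D n t u) \<le> max (ds s t) (ds t u) + \<gamma> ^ n"
        using b c by (simp add: max_def)
      then show ?thesis using a m by linarith
    qed
    then show "ds s u \<le> max (ds s t) (ds t u)" using vanish[OF g, of "ds s u - max (ds s t) (ds t u)" 2] by simp
  qed
  have fixp: "Delta \<gamma> \<delta> ds = ds"
  proof (intro ext)
    fix s t
    have "\<bar>Delta \<gamma> \<delta> ds s t - ds s t\<bar> \<le> 2 * \<gamma> ^ n" for n
    proof -
      have "\<bar>Delta \<gamma> \<delta> ds s t - Delta \<gamma> \<delta> (D n) s t\<bar> \<le> \<gamma> * \<gamma> ^ n"
        by (rule lipD) (use B2 in \<open>simp add: abs_minus_commute\<close>)
      moreover have "\<bar>D (Suc n) s t - ds s t\<bar> \<le> \<gamma> ^ Suc n" by (rule B2)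
      moreover have "\<gamma> * \<gamma> ^ n \<le> \<gamma> ^ n" using g by (simp add: mult_left_le_one_le)
      ultimately show ?thesis by (simp add: DS abs_le_iff)
    qed
    then have "\<bar>Delta \<gamma> \<delta> ds s t - ds s t\<bar> \<le> 0" using vanish[OF g] by blast
    then show "Delta \<gamma> \<delta> ds s t = ds s t" by simp
  qed
  have uniq: "d' = ds" if "pseudo_ultrametric d'" "Delta \<gamma> \<delta> d' = d'" for d'
  proof (intro ext)
    fix s t
    have B3: "\<bar>d' s t - D n s t\<bar> \<le> \<gamma> ^ n" for n
    proof (induction n arbitrary: s t)
      case 0 then show ?case using pum_nonneg[OF that(1)] pum_le1[OF that(1)] by (simp add: D0)
    next
      case (Suc n)
      have "\<bar>Delta \<gamma> \<delta> d' s t - Delta \<gamma> \<delta> (D n) s t\<bar> \<le> \<gamma> * \<gamma> ^ n"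
        by (rule lipD) (rule Suc.IH)
      then show ?case using that(2) by (simp add: DS)
    qed
    have "\<bar>d' s t - ds s t\<bar> \<le> 2 * \<gamma> ^ n" for n using B3[of n] B2[of n s t] by (simp add: abs_le_iff)
    then have "\<bar>d' s t - ds s t\<bar> \<le> 0" using vanish[OF g] by blast
    then show "d' s t = ds s t" by simp
  qed
  have bd: "behav_dist \<gamma> \<delta> = ds"
    unfolding behav_dist_def
  proof (rule the_equality)
    show "pseudo_ultrametric ds \<and> Delta \<gamma> \<delta> ds = ds \<and>
      (\<forall>d'. pseudo_ultrametric d' \<and> Delta \<gamma> \<delta> d' = d' \<longrightarrow> (\<forall>s t. ds s t \<le> d' s t))"
    proof (intro conjI pds fixp allI impI)
      fix d' s t assume "pseudo_ultrametric d' \<and> Delta \<gamma> \<delta> d' = d'"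
      then have "d' = ds" using uniq by blast
      then show "ds s t \<le> d' s t" by simp
    qed
  next
    fix d assume "pseudo_ultrametric d \<and> Delta \<gamma> \<delta> d = d \<and>
      (\<forall>d'. pseudo_ultrametric d' \<and> Delta \<gamma> \<delta> d' = d' \<longrightarrow> (\<forall>s t. d s t \<le> d' s t))"
    then show "d = ds" using uniq by blast
  qed
  define N where "N = nat \<lceil>ln \<epsilon> / ln \<gamma>\<rceil>"
  have gN: "\<gamma> ^ N \<le> \<epsilon>"
  proof -
    have lg: "ln \<gamma> < 0" using g by simp
    have le: "ln \<epsilon> \<le> 0" using assms(4,5) by simp
    have "0 \<le> ln \<epsilon> / ln \<gamma>" using lg le by (simp add: divide_nonpos_neg)
    then have "ln \<epsilon> / ln \<gamma> \<le> real N" unfolding N_def by linarith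
    then have "real N * ln \<gamma> \<le> ln \<epsilon>" using lg by (simp add: divide_le_eq)
    then have "ln (\<gamma> ^ N) \<le> ln \<epsilon>" using g by (simp add: ln_realpow)
    then show ?thesis using g assms(4) by simp
  qed
  have "sup_norm (\<lambda>s t. D N s t - ds s t) \<le> \<gamma> ^ N"
    unfolding sup_norm_def
  proof (subst Max_le_iff)
    show "\<forall>a\<in>range (\<lambda>(s, t). \<bar>D N s t - ds s t\<bar>). a \<le> \<gamma> ^ N"
    proof
      fix a assume "a \<in> range (\<lambda>(s, t). \<bar>D N s t - ds s t\<bar>)"
      then obtain s t where "a = \<bar>D N s t - ds s t\<bar>" by auto
      then show "a \<le> \<gamma> ^ N" using B2[of N s t] by simp
    qed
  qed auto
  then have "sup_norm (\<lambda>s t. D N s t - ds s t) \<le> \<epsilon>" using gN by linarith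
  then show ?thesis by (simp only: bd D_def N_def)
qed

end
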